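(* Let $G=(N,T,F,P,S)$ be a grounded indexed grammar, $D$ a derivation tree of $G$ (with some set of marked positions of its yield), and let $R$ be the set of $3$-tuples $(\tau_1,\tau_2,\tau_3)$ of pairwise disjoint subsets of $N$ with union $N$. For every $W\subseteq N\times N\times R$, every limited controlled descent in $D$ which respects $W$ has at most $(|N|\cdot 3^{|N|})^{|W|+1}$ splits.
   Context: An indexed grammar $G=(N,T,F,P,S)$ has finite alphabets $N$ (nonterminals), $T$ (terminals), $F$ (stack symbols), start symbol $S$, and productions of the forms $A\to r$, $A\to Bf$, $Af\to r$ ($A,B\in N$, $f\in F$, $r\in(N\cup T)^*$); nonterminals carry stacks $x\in F^*$ (written $Ax$, top first); applying $A\to r$ to $Ax$ gives $r$ with each nonterminal $C$ replaced by $Cx$; $A\to Bf$ turns $Ax$ into $Bfx$; $Af\to r$ turns $Afy$ into $r$ with each nonterminal $C$ replaced by $Cy$. $G$ is grounded if there is $\$\in F$ such that all productions have the forms $S\to A\$$, $A\to r$, $A\to Bf$, $Af\to r$, $A\$\to s$ with $A,B\in N\setminus\{S\}$, $f\in F\setminus\{\$\}$, $r\in(N\setminus\{S\})^+$, $s\in T^*$. A derivation tree is an ordered tree with root labelled $S$ (empty stack), internal nodes labelled in $NF^*$, leaves labelled in $T^*$, where the children of each internal node are obtained from its label by one production (a production $A\$\to s'$ yields a single leaf labelled $s'$); its yield is the concatenation of leaf labels. Marking: a leaf is marked if its label contains a marked position of the yield; an internal node is marked if it has a marked descendant; a branch node is a node with more than one marked child. For an internal node $v$ labelled $Ax$: $\sigma(v)=A$,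 $\eta(v)=|x|$; $v'$ is in the scope of $v$ iff $v'$ is internal and there is a downward path from $v$ to $v'$ all of whose nodes $v''$ (including $v'$) satisfy $\eta(v'')\ge \eta(v)$; $\beta(v)$ is the set of nodes in the scope of $v$ none of whose children is in the scope of $v$; $\tau(v)=(\tau_1,\tau_2,\tau_3)\in R$ with $\tau_1=\{A:\sigma(v')\ne A\ \forall v'\in\beta(v)\}$, $\tau_2=\{A:\exists v'\in\beta(v),\sigma(v')=A$, and no marked $v'\in\beta(v)$ has $\sigma(v')=A\}$, $\tau_3=\{A:\exists$ marked $v'\in\beta(v)$ with $\sigma(v')=A\}$. A descent is a list of internal nodes $H=(v_0,\dots,v_m)$, $m\ge0$, with $v_m\in\beta(v_0)$ and each $v_i$ ($i\ge1$) a (not necessarily immediate) descendant of $v_{i-1}$; it is controlled if each $v_i$ ($i\ge 1$) is a child of $v_{i-1}$. For $0\le i<m$ there is a split between $i$ and $i+1$ iff some node on the tree path from $v_i$ (inclusive) to $v_{i+1}$ (exclusive) is a branch node; the number of splits of $H$ is the number of such $i$. $H$ is limited iff for all $0\le b_1<t_1<t_2\le b_2\le m$ with $\sigma(v_{b_1})=\sigma(v_{t_1})$, $\sigma(v_{t_2})=\sigma(v_{b_2})$, $v_{b_2}\in\beta(v_{b_1})$, $v_{t_2}\in\beta(v_{t_1})$ and $\tau(v_{b_1})=\tau(v_{t_1})$, there is no split between $i$ and $i+1$ for any $b_1\le i<t_1$ or $t_2\le i<b_2$. $H$ respects $W$ iff for all $0\le i<j\le m$ with $v_j\in\beta(v_i)$,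 the triple $(\sigma(v_i),\sigma(v_j),\tau(v_i))$ lies in $W$. *)

theory Defs
  imports Main "HOL-Library.Sublist"
begin

datatype ('n, 't) sym = NT 'n | TM 't

text \<open>Productions: A -> r, A -> B f, A f -> r.\<close>
datatype ('n, 't, 'f) prod =
    Plain 'n "('n, 't) sym list"
  | Push 'n 'n 'f
  | Pop 'n 'f "('n, 't) sym list"

definition syms :: "'n set \<Rightarrow> 't set \<Rightarrow> ('n, 't) sym set" where
  "syms N T = NT ` N \<union> TM ` T"

definition prod_ok :: "'n set \<Rightarrow> 't set \<Rightarrow> 'f set \<Rightarrow> ('n, 't, 'f) prod \<Rightarrow> bool" where
  "prod_ok N T F p = (case p of
      Plain A r \<Rightarrow> A \<in> N \<and> set r \<subseteq> syms N T
    | Push A B f \<Rightarrow> A \<in> N \<and> B \<in> N \<and> f \<in> F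
    | Pop A f r \<Rightarrow> A \<in> N \<and> f \<in> F \<and> set r \<subseteq> syms N T)"

definition indexed_grammar ::
  "'n set \<Rightarrow> 't set \<Rightarrow> 'f set \<Rightarrow> ('n, 't, 'f) prod set \<Rightarrow> 'n \<Rightarrow> bool" where
  "indexed_grammar N T F P S =
     (finite N \<and> finite T \<and> finite F \<and> finite P \<and> S \<in> N \<and> (\<forall>p\<in>P. prod_ok N T F p))"

text \<open>Grounded: there is a bottom symbol d (the paper's dollar) such that all productions
  have the forms S -> A d, A -> r, A -> B f, A f -> r, A d -> s.\<close>
definition grounded ::
  "'n set \<Rightarrow> 't set \<Rightarrow> 'f set \<Rightarrow> ('n, 't, 'f) prod set \<Rightarrow> 'n \<Rightarrow> bool" where
  "grounded N T F P S =
     (indexed_grammar N T F P S \<and>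
      (\<exists>d\<in>F. \<forall>p\<in>P. (case p of
          Push A B f \<Rightarrow> (A = S \<and> B \<in> N - {S} \<and> f = d)
                      \<or> (A \<in> N - {S} \<and> B \<in> N - {S} \<and> f \<in> F - {d})
        | Plain A r \<Rightarrow> A \<in> N - {S} \<and> r \<noteq> [] \<and> set r \<subseteq> NT ` (N - {S})
        | Pop A f r \<Rightarrow> A \<in> N - {S} \<and>
                      ((f \<in> F - {d} \<and> r \<noteq> [] \<and> set r \<subseteq> NT ` (N - {S}))
                       \<or> (f = d \<and> set r \<subseteq> TM ` T)))))"

text \<open>Internal nodes carry a nonterminal and a stack (top first); leaves carry a terminal word.\<close>
datatype ('n, 't, 'f) dtree = DNode 'n "'f list" "('n, 't, 'f) dtree list" | DLeaf "'t list"

fun node_lab :: "('n, 't, 'f) dtree \<Rightarrow> ('n \<times> 'f list) option" where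
  "node_lab (DNode A x ts) = Some (A, x)"
| "node_lab (DLeaf s) = None"

definition nodes_for :: "'n list \<Rightarrow> 'f list \<Rightarrow> ('n, 't, 'f) dtree list \<Rightarrow> bool" where
  "nodes_for cs x ts = list_all2 (\<lambda>C t. node_lab t = Some (C, x)) cs ts"

text \<open>The children of a node labelled A x are obtained by one production; a production
  A d -> s (right-hand side consisting of terminals) yields a single leaf labelled s.\<close>
definition step_ok :: "('n, 't, 'f) prod set \<Rightarrow> 'n \<Rightarrow> 'f list \<Rightarrow> ('n, 't, 'f) dtree list \<Rightarrow> bool" where
  "step_ok P A x ts = (\<exists>p\<in>P. case p of
      Plain B r \<Rightarrow> B = A \<and> (\<exists>cs. r = map NT cs \<and> nodes_for cs x ts)
    | Push B C f \<Rightarrow> B = A \<and> (\<exists>t. ts = [t] \<and> node_lab t = Some (C, f # x))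
    | Pop B f r \<Rightarrow> B = A \<and> (\<exists>y. x = f # y \<and>
          ((\<exists>s. r = map TM s \<and> ts = [DLeaf s])
           \<or> (\<exists>cs. cs \<noteq> [] \<and> r = map NT cs \<and> nodes_for cs y ts))))"

fun valid :: "('n, 't, 'f) prod set \<Rightarrow> ('n, 't, 'f) dtree \<Rightarrow> bool" where
  "valid P (DLeaf s) = True"
| "valid P (DNode A x ts) = (step_ok P A x ts \<and> (\<forall>t\<in>set ts. valid P t))"

definition is_dtree :: "('n, 't, 'f) prod set \<Rightarrow> 'n \<Rightarrow> ('n, 't, 'f) dtree \<Rightarrow> bool" where
  "is_dtree P S D = (valid P D \<and> node_lab D = Some (S, []))"

fun yield :: "('n, 't, 'f) dtree \<Rightarrow> 't list" where
  "yield (DLeaf s) = s"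
| "yield (DNode A x ts) = concat (map yield ts)"

fun subt :: "('n, 't, 'f) dtree \<Rightarrow> nat list \<Rightarrow> ('n, 't, 'f) dtree option" where
  "subt t [] = Some t"
| "subt (DLeaf s) (i # p) = None"
| "subt (DNode A x ts) (i # p) = (if i < length ts then subt (ts ! i) p else None)"

fun offs :: "('n, 't, 'f) dtree \<Rightarrow> nat list \<Rightarrow> nat" where
  "offs t [] = 0"
| "offs (DLeaf s) (i # p) = 0"
| "offs (DNode A x ts) (i # p) =
     (if i < length ts then sum_list (map (length \<circ> yield) (take i ts)) + offs (ts ! i) p else 0)"

definition internal :: "('n, 't, 'f) dtree \<Rightarrow> nat list \<Rightarrow> bool" where
  "internal D v = (\<exists>A x ts. subt D v = Some (DNode A x ts))"

definition sigma :: "('n, 't, 'f) dtree \<Rightarrow> nat list \<Rightarrow> 'n" where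
  "sigma D v = fst (the (node_lab (the (subt D v))))"

definition eta :: "('n, 't, 'f) dtree \<Rightarrow> nat list \<Rightarrow> nat" where
  "eta D v = length (snd (the (node_lab (the (subt D v)))))"

definition child :: "('n, 't, 'f) dtree \<Rightarrow> nat list \<Rightarrow> nat list \<Rightarrow> bool" where
  "child D v w = (\<exists>i. w = v @ [i] \<and> subt D w \<noteq> None)"

text \<open>M is the set of marked positions (0-based indices) of the yield.\<close>
definition leaf_marked :: "('n, 't, 'f) dtree \<Rightarrow> nat set \<Rightarrow> nat list \<Rightarrow> bool" where
  "leaf_marked D M v = (\<exists>s. subt D v = Some (DLeaf s) \<and>
      (\<exists>k\<in>M. offs D v \<le> k \<and> k < offs D v + length s))"

inductive marked :: "('n, 't, 'f) dtree \<Rightarrow> nat set \<Rightarrow> nat list \<Rightarrow> bool" for D M where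
  leaf: "leaf_marked D M v \<Longrightarrow> marked D M v"
| inner: "internal D v \<Longrightarrow> strict_prefix v w \<Longrightarrow> marked D M w \<Longrightarrow> marked D M v"

definition branch :: "('n, 't, 'f) dtree \<Rightarrow> nat set \<Rightarrow> nat list \<Rightarrow> bool" where
  "branch D M v = (card {w. child D v w \<and> marked D M w} > 1)"

definition scope :: "('n, 't, 'f) dtree \<Rightarrow> nat list \<Rightarrow> nat list \<Rightarrow> bool" where
  "scope D v v' = (internal D v \<and> internal D v' \<and> prefix v v' \<and>
      (\<forall>u. prefix v u \<and> prefix u v' \<longrightarrow> eta D u \<ge> eta D v))"

definition beta :: "('n, 't, 'f) dtree \<Rightarrow> nat list \<Rightarrow> nat list set" where
  "beta D v = {v'. scope D v v' \<and> (\<forall>w. child D v' w \<longrightarrow> \<not> scope D v w)}"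

definition tau :: "'n set \<Rightarrow> ('n, 't, 'f) dtree \<Rightarrow> nat set \<Rightarrow> nat list \<Rightarrow> 'n set \<times> 'n set \<times> 'n set" where
  "tau N D M v =
     ({A\<in>N. \<forall>v'\<in>beta D v. sigma D v' \<noteq> A},
      {A\<in>N. (\<exists>v'\<in>beta D v. sigma D v' = A) \<and> \<not> (\<exists>v'\<in>beta D v. marked D M v' \<and> sigma D v' = A)},
      {A\<in>N. \<exists>v'\<in>beta D v. marked D M v' \<and> sigma D v' = A})"

definition Rtrip :: "'n set \<Rightarrow> ('n set \<times> 'n set \<times> 'n set) set" where
  "Rtrip N = {(a, b, c). a \<inter> b = {} \<and> a \<inter> c = {} \<and> b \<inter> c = {} \<and> a \<union> b \<union> c = N}"

section \<open>Descents (H = [v_0, ..., v_m], m = length H - 1)\<close>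

definition descent :: "('n, 't, 'f) dtree \<Rightarrow> nat list list \<Rightarrow> bool" where
  "descent D H = (H \<noteq> [] \<and> (\<forall>v\<in>set H. internal D v) \<and> last H \<in> beta D (hd H) \<and>
      (\<forall>i. 0 < i \<and> i < length H \<longrightarrow> strict_prefix (H ! (i - 1)) (H ! i)))"

definition controlled :: "('n, 't, 'f) dtree \<Rightarrow> nat list list \<Rightarrow> bool" where
  "controlled D H = (descent D H \<and> (\<forall>i. 0 < i \<and> i < length H \<longrightarrow> child D (H ! (i - 1)) (H ! i)))"

text \<open>Split between i and i+1.\<close>
definition split_at :: "('n, 't, 'f) dtree \<Rightarrow> nat set \<Rightarrow> nat list list \<Rightarrow> nat \<Rightarrow> bool" where
  "split_at D M H i = (\<exists>u. prefix (H ! i) u \<and> strict_prefix u (H ! Suc i) \<and> branch D M u)"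

definition nsplits :: "('n, 't, 'f) dtree \<Rightarrow> nat set \<Rightarrow> nat list list \<Rightarrow> nat" where
  "nsplits D M H = card {i. Suc i < length H \<and> split_at D M H i}"

definition limited :: "'n set \<Rightarrow> ('n, 't, 'f) dtree \<Rightarrow> nat set \<Rightarrow> nat list list \<Rightarrow> bool" where
  "limited N D M H = (\<forall>b1 t1 t2 b2. b1 < t1 \<and> t1 < t2 \<and> t2 \<le> b2 \<and> b2 < length H
      \<and> sigma D (H ! b1) = sigma D (H ! t1) \<and> sigma D (H ! t2) = sigma D (H ! b2)
      \<and> H ! b2 \<in> beta D (H ! b1) \<and> H ! t2 \<in> beta D (H ! t1)
      \<and> tau N D M (H ! b1) = tau N D M (H ! t1)
      \<longrightarrow> (\<forall>i. b1 \<le> i \<and> i < t1 \<longrightarrow> \<not> split_at D M H i)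
        \<and> (\<forall>i. t2 \<le> i \<and> i < b2 \<longrightarrow> \<not> split_at D M H i))"

definition respects_W :: "'n set \<Rightarrow> ('n, 't, 'f) dtree \<Rightarrow> nat set
    \<Rightarrow> ('n \<times> 'n \<times> ('n set \<times> 'n set \<times> 'n set)) set \<Rightarrow> nat list list \<Rightarrow> bool" where
  "respects_W N D M W H = (\<forall>i j. i < j \<and> j < length H \<and> H ! j \<in> beta D (H ! i)
      \<longrightarrow> (sigma D (H ! i), sigma D (H ! j), tau N D M (H ! i)) \<in> W)"

end

theory Submission
  imports Defs "HOL-Library.FuncSet"
begin


lemma subt_append: "subt t (p @ q) = (case subt t p of None \<Rightarrow> None | Some t' \<Rightarrow> subt t' q)"
  by (induction t p rule: subt.induct) auto

lemma valid_subt: "valid P t \<Longrightarrow> subt t v = Some t' \<Longrightarrow> valid P t'"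
  by (induction t v rule: subt.induct) (auto split: if_splits)

lemma nodes_for_set: "nodes_for cs x ts \<Longrightarrow> t \<in> set ts \<Longrightarrow> \<exists>C. node_lab t = Some (C, x)"
proof -
  assume a: "nodes_for cs x ts" "t \<in> set ts"
  obtain i where i: "i < length ts" "t = ts ! i" using a(2) by (auto simp: in_set_conv_nth)
  have "length cs = length ts \<and> (\<forall>i<length cs. node_lab (ts ! i) = Some (cs ! i, x))"
    using a(1) unfolding nodes_for_def list_all2_conv_all_nth by blast
  then show ?thesis using i by auto
qed

lemma nodes_for_stack: "nodes_for cs x ts \<Longrightarrow> \<forall>t\<in>set ts. \<forall>B y us. t = DNode B y us \<longrightarrow> y = x"
proof (intro ballI allI impI)
  fix t B y us assume a: "nodes_for cs x ts" "t \<in> set ts" "t = DNode B y us"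
  obtain C where "node_lab t = Some (C, x)" using nodes_for_set[OF a(1,2)] by blast
  then show "y = x" using a(3) by simp
qed

lemma child_stack:
  assumes "valid P (DNode A x ts)"
  shows "\<exists>x'. length x' \<le> Suc (length x) \<and> (\<forall>t\<in>set ts. \<forall>B y us. t = DNode B y us \<longrightarrow> y = x')"
proof -
  from assms have "step_ok P A x ts" by simp
  then obtain p where p: "p \<in> P" and c: "case p of
      Plain B r \<Rightarrow> B = A \<and> (\<exists>cs. r = map NT cs \<and> nodes_for cs x ts)
    | Push B C f \<Rightarrow> B = A \<and> (\<exists>t. ts = [t] \<and> node_lab t = Some (C, f # x))
    | Pop B f r \<Rightarrow> B = A \<and> (\<exists>y. x = f # y \<and>
          ((\<exists>s. r = map TM s \<and> ts = [DLeaf s])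
           \<or> (\<exists>cs. cs \<noteq> [] \<and> r = map NT cs \<and> nodes_for cs y ts)))"
    unfolding step_ok_def by blast
  show ?thesis
  proof (cases p)
    case (Plain B r)
    then obtain cs where "nodes_for cs x ts" using c by auto
    then have "\<forall>t\<in>set ts. \<forall>B y us. t = DNode B y us \<longrightarrow> y = x"
      by (rule nodes_for_stack)
    then show ?thesis by (intro exI[of _ x]) simp
  next
    case (Push B C f)
    then obtain t where "ts = [t]" "node_lab t = Some (C, f # x)" using c by auto
    then show ?thesis by (intro exI[of _ "f # x"]) auto
  next
    case (Pop B f r)
    then obtain y where y: "x = f # y" and
      d: "(\<exists>s. r = map TM s \<and> ts = [DLeaf s]) \<or> (\<exists>cs. cs \<noteq> [] \<and> r = map NT cs \<and> nodes_for cs y ts)"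
      using c by auto
    from d show ?thesis
    proof
      assume "\<exists>s. r = map TM s \<and> ts = [DLeaf s]"
      then show ?thesis using y by (intro exI[of _ y]) auto
    next
      assume "\<exists>cs. cs \<noteq> [] \<and> r = map NT cs \<and> nodes_for cs y ts"
      then obtain cs where "nodes_for cs y ts" by auto
      then have "\<forall>t\<in>set ts. \<forall>B y' us. t = DNode B y' us \<longrightarrow> y' = y"
        by (rule nodes_for_stack)
      then show ?thesis using y by (intro exI[of _ y]) simp
    qed
  qed
qed

lemma child_eta:
  assumes "valid P D" "internal D v"
  shows "\<exists>n. n \<le> Suc (eta D v) \<and> (\<forall>w. child D v w \<longrightarrow> internal D w \<longrightarrow> eta D w = n)"
proof -
  obtain A x ts where s: "subt D v = Some (DNode A x ts)" using assms(2) unfolding internal_def by auto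
  have "valid P (DNode A x ts)" using valid_subt[OF assms(1) s] .
  then obtain x' where x': "length x' \<le> Suc (length x)" "\<forall>t\<in>set ts. \<forall>B y us. t = DNode B y us \<longrightarrow> y = x'"
    using child_stack[OF \<open>valid P (DNode A x ts)\<close>] by (elim exE conjE) simp
  have ev: "eta D v = length x" using s unfolding eta_def by simp
  have "eta D w = length x'" if cw: "child D v w" "internal D w" for w
  proof -
    obtain i where w: "w = v @ [i]" using cw(1) unfolding child_def by auto
    obtain B y us where sw: "subt D w = Some (DNode B y us)" using cw(2) unfolding internal_def by auto
    have "subt D w = (if i < length ts then Some (ts ! i) else None)" using s w by (simp add: subt_append)
    then have "i < length ts" "ts ! i = DNode B y us" using sw by (auto split: if_splits)
    then have "ts ! i \<in> set ts" by (intro nth_mem)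
    then have "DNode B y us \<in> set ts" using \<open>ts ! i = DNode B y us\<close> by simp
    then have "y = x'" using x'(2) by blast
    then show ?thesis using sw unfolding eta_def by simp
  qed
  then have "\<forall>w. child D v w \<longrightarrow> internal D w \<longrightarrow> eta D w = length x'" by blast
  moreover have "length x' \<le> Suc (eta D v)" using x'(1) ev by simp
  ultimately show ?thesis by blast
qed

context
  fixes D :: "('n, 't, 'f) dtree" and H :: "nat list list"
  assumes ctl: "controlled D H"
begin

lemma H_ne: "H \<noteq> []" using ctl unfolding controlled_def descent_def by auto

lemma H_int: "k < length H \<Longrightarrow> internal D (H ! k)"
  using ctl unfolding controlled_def descent_def by auto

lemma H_child: "Suc k < length H \<Longrightarrow> child D (H ! k) (H ! Suc k)"
proof -
  assume a: "Suc k < length H"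
  have "\<forall>i. 0 < i \<and> i < length H \<longrightarrow> child D (H ! (i - 1)) (H ! i)"
    using ctl unfolding controlled_def by blast
  then have "child D (H ! (Suc k - 1)) (H ! Suc k)" using a by blast
  then show ?thesis by simp
qed

lemma hpre: "i \<le> k \<Longrightarrow> k < length H \<Longrightarrow> prefix (H ! i) (H ! k) \<and> length (H ! k) = length (H ! i) + (k - i)"
proof (induction k)
  case 0 then show ?case by simp
next
  case (Suc k)
  show ?case
  proof (cases "i = Suc k")
    case False
    then have ik: "i \<le> k" using Suc by auto
    obtain c where c: "H ! Suc k = H ! k @ [c]" using H_child[OF Suc.prems(2)] unfolding child_def by auto
    have "prefix (H ! i) (H ! k) \<and> length (H ! k) = length (H ! i) + (k - i)" using Suc ik by auto
    then have p1: "prefix (H ! i) (H ! k)" and l1: "length (H ! k) = length (H ! i) + (k - i)" by auto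
    have "prefix (H ! k) (H ! Suc k)" unfolding c by simp
    then have "prefix (H ! i) (H ! Suc k)" using p1 by (rule prefix_order.trans[rotated])
    moreover have "length (H ! Suc k) = length (H ! i) + (Suc k - i)" unfolding c using l1 ik by simp
    ultimately show ?thesis by blast
  qed simp
qed

lemma hbetween:
  assumes "i \<le> k" "k < length H" "prefix (H ! i) u" "prefix u (H ! k)"
  shows "\<exists>l. i \<le> l \<and> l \<le> k \<and> u = H ! l"
proof -
  define l where "l = i + (length u - length (H ! i))"
  have l1: "length (H ! i) \<le> length u" using assms(3) prefix_length_le by blast
  have l2: "length u \<le> length (H ! k)" using assms(4) prefix_length_le by blast
  have lk: "l \<le> k" using l1 l2 hpre[OF assms(1,2)] assms(1) unfolding l_def by arith
  have hl: "prefix (H ! l) (H ! k) \<and> length (H ! l) = length (H ! i) + (l - i)"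
    using hpre[of l k] hpre[of i l] lk assms unfolding l_def by auto
  then have len: "length (H ! l) = length u" using l1 unfolding l_def by auto
  have "u = H ! l"
    using prefix_length_prefix[OF assms(4) conjunct1[OF hl]] prefix_length_prefix[OF conjunct1[OF hl] assms(4)] len
    by (simp add: prefix_order.antisym)
  moreover have "i \<le> l" unfolding l_def by simp
  ultimately show ?thesis using lk by blast
qed

lemma scope_iff:
  assumes "i \<le> k" "k < length H"
  shows "scope D (H ! i) (H ! k) \<longleftrightarrow> (\<forall>l. i \<le> l \<and> l \<le> k \<longrightarrow> eta D (H ! i) \<le> eta D (H ! l))"
proof
  assume sc: "scope D (H ! i) (H ! k)"
  show "\<forall>l. i \<le> l \<and> l \<le> k \<longrightarrow> eta D (H ! i) \<le> eta D (H ! l)"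
  proof (intro allI impI)
    fix l assume l: "i \<le> l \<and> l \<le> k"
    have "prefix (H ! i) (H ! l)" "prefix (H ! l) (H ! k)" using hpre[of i l] hpre[of l k] l assms by auto
    moreover have "\<forall>u. prefix (H ! i) u \<and> prefix u (H ! k) \<longrightarrow> eta D u \<ge> eta D (H ! i)"
      using sc unfolding scope_def by (elim conjE) assumption
    ultimately show "eta D (H ! i) \<le> eta D (H ! l)" by blast
  qed
next
  assume a: "\<forall>l. i \<le> l \<and> l \<le> k \<longrightarrow> eta D (H ! i) \<le> eta D (H ! l)"
  have "\<forall>u. prefix (H ! i) u \<and> prefix u (H ! k) \<longrightarrow> eta D u \<ge> eta D (H ! i)"
  proof (intro allI impI)
    fix u assume "prefix (H ! i) u \<and> prefix u (H ! k)"
    then obtain l where l: "i \<le> l" "l \<le> k" "u = H ! l" using hbetween[OF assms] by blast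
    have "eta D (H ! i) \<le> eta D (H ! l)" using a l(1,2) by blast
    then show "eta D u \<ge> eta D (H ! i)" using l(3) by simp
  qed
  moreover have "internal D (H ! i)" "internal D (H ! k)" using H_int assms by auto
  ultimately show "scope D (H ! i) (H ! k)" unfolding scope_def using conjunct1[OF hpre[OF assms]] by (intro conjI)
qed

end


locale adesc =
  fixes m :: nat and h :: "nat \<Rightarrow> nat" and bt :: "nat \<Rightarrow> nat \<Rightarrow> bool" and Spl :: "nat set"
    and sg :: "nat \<Rightarrow> 'a" and ta :: "nat \<Rightarrow> 'b" and W :: "('a \<times> 'a \<times> 'b) set"
    and K :: nat and CS :: "('a \<times> 'b) set"
  assumes A1: "\<And>i k. i \<le> k \<Longrightarrow> k \<le> m \<Longrightarrow> bt i k = ((\<forall>l. i \<le> l \<and> l \<le> k \<longrightarrow> h i \<le> h l) \<and> (k = m \<or> h (Suc k) < h i))"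
  and A2: "\<And>i. i < m \<Longrightarrow> h (Suc i) \<le> Suc (h i)"
  and Lim: "\<And>b1 t1 t2 b2 i. b1 < t1 \<Longrightarrow> t1 < t2 \<Longrightarrow> t2 \<le> b2 \<Longrightarrow> b2 \<le> m \<Longrightarrow> sg b1 = sg t1 \<Longrightarrow> sg t2 = sg b2
      \<Longrightarrow> bt b1 b2 \<Longrightarrow> bt t1 t2 \<Longrightarrow> ta b1 = ta t1 \<Longrightarrow> (b1 \<le> i \<and> i < t1) \<or> (t2 \<le> i \<and> i < b2) \<Longrightarrow> i \<notin> Spl"
  and Wcol: "\<And>a b c. (a,b,c) \<in> W \<Longrightarrow> (a,c) \<in> CS"
  and CSfin: "finite CS" and CScard: "card CS \<le> K" and K3: "3 \<le> K"
begin

definition ends where "ends i k \<longleftrightarrow> i \<le> k \<and> k \<le> m \<and> (\<forall>l. i \<le> l \<and> l \<le> k \<longrightarrow> h i \<le> h l) \<and> (k = m \<or> h (Suc k) < h i)"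

lemma bt_ends: "ends i k \<Longrightarrow> bt i k"
  using A1 unfolding ends_def by blast

lemma ends_ex: assumes "i \<le> m" shows "\<exists>k. ends i k"
proof -
  define k0 where "k0 = (LEAST k. i \<le> k \<and> (k = m \<or> h (Suc k) < h i))"
  have ex: "i \<le> m \<and> (m = m \<or> h (Suc m) < h i)" using assms by simp
  have k0: "i \<le> k0 \<and> (k0 = m \<or> h (Suc k0) < h i)" unfolding k0_def using LeastI[of "\<lambda>k. i \<le> k \<and> (k = m \<or> h (Suc k) < h i)" m] ex by blast
  have k0m: "k0 \<le> m" unfolding k0_def using Least_le[of "\<lambda>k. i \<le> k \<and> (k = m \<or> h (Suc k) < h i)" m] ex by blast
  have "\<forall>l. i \<le> l \<and> l \<le> k0 \<longrightarrow> h i \<le> h l"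
  proof (intro allI impI)
    fix l assume l: "i \<le> l \<and> l \<le> k0"
    show "h i \<le> h l"
    proof (cases "l = i")
      case False
      then have "l - 1 < k0" "i \<le> l - 1" using l by auto
      then have "\<not> (i \<le> l - 1 \<and> (l - 1 = m \<or> h (Suc (l - 1)) < h i))"
        unfolding k0_def using not_less_Least by blast
      then show ?thesis using \<open>i \<le> l - 1\<close> False l by (cases l) auto
    qed simp
  qed
  then show ?thesis using k0 k0m unfolding ends_def by blast
qed

lemma ends_lam: assumes "ends t e" "t \<le> s" "s \<le> e" "ends s k" shows "k \<le> e"
proof (rule ccontr)
  assume "\<not> k \<le> e"
  then have ke: "e < k" by simp
  then have "e \<noteq> m" using assms(4) unfolding ends_def by auto
  then have "h (Suc e) < h t" using assms(1) unfolding ends_def by auto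
  moreover have "h s \<le> h (Suc e)" using assms(3,4) ke unfolding ends_def by auto
  moreover have "h t \<le> h s" using assms(1,2,3) unfolding ends_def by auto
  ultimately show False by simp
qed

lemma ends_base: "ends t e \<Longrightarrow> t \<le> q \<Longrightarrow> q \<le> e \<Longrightarrow> h q = h t \<Longrightarrow> ends q e"
  unfolding ends_def by auto

lemma F:
  assumes te: "ends t e"
    and IH: "\<And>s k. t < s \<Longrightarrow> ends s k \<Longrightarrow> k \<le> e \<Longrightarrow> card (Spl \<inter> {s..<k}) \<le> E"
  shows "t \<le> p \<Longrightarrow> p \<le> e \<Longrightarrow> h p = h t \<Longrightarrow>
     card (Spl \<inter> {p..<e}) \<le> card ((\<lambda>q. (sg q, ta q)) ` {q. p \<le> q \<and> q < e \<and> h q = h t}) * (E + 2)"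
proof (induction "e - p" arbitrary: p rule: less_induct)
  case less
  define CSet where "CSet p = (\<lambda>q. (sg q, ta q)) ` {q. p \<le> q \<and> q < e \<and> h q = h t}" for p
  have finC: "finite (CSet p)" for p unfolding CSet_def
    by (rule finite_imageI) (rule finite_subset[of _ "{..<e}"], auto)
  have em: "e \<le> m" using te unfolding ends_def by auto
  show ?case
  proof (cases "p < e")
    case False
    then have "Spl \<inter> {p..<e} = {}" by auto
    then show ?thesis by simp
  next
    case pe: True
    have colp: "(sg p, ta p) \<in> CSet p" unfolding CSet_def using pe less.prems by auto
    then have c1: "card (CSet p) \<ge> 1" using finC by (metis One_nat_def Suc_leI card_gt_0_iff empty_iff)
    have pe_ends: "ends p e" using ends_base[OF te] less.prems by auto
    show ?thesis
    proof (cases "\<exists>q. p < q \<and> q < e \<and> h q = h t \<and> (sg q, ta q) = (sg p, ta p)")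
      case True
      then obtain q where q: "p < q" "q < e" "h q = h t" "(sg q, ta q) = (sg p, ta p)" by blast
      have qe: "ends q e" using ends_base[OF te] q less.prems by auto
      have "\<forall>i. p \<le> i \<and> i < q \<longrightarrow> i \<notin> Spl"
        using Lim[of p q e e] q bt_ends[OF pe_ends] bt_ends[OF qe] em by auto
      then have eq: "Spl \<inter> {p..<e} = Spl \<inter> {q..<e}" using q by auto
      have h1: "card (Spl \<inter> {q..<e}) \<le> card (CSet q) * (E + 2)"
        unfolding CSet_def using less.hyps[of q] q less.prems by auto
      have h2: "card (CSet q) \<le> card (CSet p)"
        by (rule card_mono[OF finC]) (unfold CSet_def, use q in auto)
      have "card (Spl \<inter> {p..<e}) \<le> card (CSet p) * (E + 2)"
        unfolding eq by (rule le_trans[OF h1 mult_le_mono1[OF h2]])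
      then show ?thesis unfolding CSet_def .
    next
      case False
      have sub: "CSet p' \<subseteq> CSet p - {(sg p, ta p)}" if "p < p'" for p'
        using False that unfolding CSet_def by auto
      have cs: "card (CSet p') \<le> card (CSet p) - 1" if "p < p'" for p'
        using card_mono[OF _ sub[OF that]] finC colp by (simp add: card_Diff_singleton)
      obtain c where c: "card (CSet p) = Suc c" using c1 by (cases "card (CSet p)") auto
      have key: "\<And>p'. p < p' \<Longrightarrow> p' \<le> e \<Longrightarrow> h p' = h t \<Longrightarrow> card (Spl \<inter> {p'..<e}) \<le> c * (E + 2)"
      proof -
        fix p' assume a: "p < p'" "p' \<le> e" "h p' = h t"
        have "card (Spl \<inter> {p'..<e}) \<le> card (CSet p') * (E + 2)"
          unfolding CSet_def using less.hyps[of p'] a less.prems pe by auto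
        also have "\<dots> \<le> c * (E + 2)" using cs[OF a(1)] c by (intro mult_le_mono1) simp
        finally show "card (Spl \<inter> {p'..<e}) \<le> c * (E + 2)" .
      qed
      have pm: "p < m" using pe em by auto
      have ge: "h t \<le> h (Suc p)" using te pe less.prems unfolding ends_def by auto
      show ?thesis
      proof (cases "h (Suc p) = h t")
        case True
        have "Spl \<inter> {p..<e} \<subseteq> insert p (Spl \<inter> {Suc p..<e})" by auto
        then have "card (Spl \<inter> {p..<e}) \<le> card (insert p (Spl \<inter> {Suc p..<e}))"
          by (rule card_mono[rotated]) auto
        also have "\<dots> \<le> Suc (card (Spl \<inter> {Suc p..<e}))" by (simp add: card_insert_if)
        also have "\<dots> \<le> Suc (c * (E + 2))" using key[of "Suc p"] True pe by auto
        also have "\<dots> \<le> card (CSet p) * (E + 2)" using c by simp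
        finally show ?thesis unfolding CSet_def .
      next
        case hne: False
        have hs: "h (Suc p) = Suc (h t)" using hne ge A2[OF pm] less.prems by auto
        obtain k where k: "ends (Suc p) k" using ends_ex[of "Suc p"] pm by auto
        have ke: "k \<le> e" using ends_lam[OF te _ _ k] pe less.prems by auto
        have IHk: "card (Spl \<inter> {Suc p..<k}) \<le> E" using IH[OF _ k ke] less.prems by auto
        show ?thesis
        proof (cases "k = e")
          case True
          have "Spl \<inter> {p..<e} \<subseteq> insert p (Spl \<inter> {Suc p..<e})" by auto
          then have "card (Spl \<inter> {p..<e}) \<le> card (insert p (Spl \<inter> {Suc p..<e}))"
            by (rule card_mono[rotated]) auto
          also have "\<dots> \<le> Suc (card (Spl \<inter> {Suc p..<e}))" by (simp add: card_insert_le_m1 card_insert_if)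
          also have "\<dots> \<le> Suc E" using IHk True by simp
          also have "\<dots> \<le> card (CSet p) * (E + 2)" using c by simp
          finally show ?thesis unfolding CSet_def .
        next
          case False
          then have kl: "k < e" using ke by auto
          then have km: "k \<noteq> m" using em by auto
          have "Suc p \<le> k" using k unfolding ends_def by blast
          then have g1: "h t \<le> h (Suc k)" using te kl less.prems unfolding ends_def by auto
          have g2: "h (Suc k) < Suc (h t)" using k km hs unfolding ends_def by auto
          have hk: "h (Suc k) = h t" using g1 g2 by simp
          have "Spl \<inter> {p..<e} \<subseteq> insert p (insert k ((Spl \<inter> {Suc p..<k}) \<union> (Spl \<inter> {Suc k..<e})))"
            by auto
          then have "card (Spl \<inter> {p..<e}) \<le> card (insert p (insert k ((Spl \<inter> {Suc p..<k}) \<union> (Spl \<inter> {Suc k..<e}))))"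
            by (rule card_mono[rotated]) auto
          also have "\<dots> \<le> Suc (Suc (card ((Spl \<inter> {Suc p..<k}) \<union> (Spl \<inter> {Suc k..<e}))))"
            by (simp add: card_insert_if)
          also have "\<dots> \<le> Suc (Suc (card (Spl \<inter> {Suc p..<k}) + card (Spl \<inter> {Suc k..<e})))"
            using card_Un_le by simp
          also have "\<dots> \<le> Suc (Suc (E + c * (E + 2)))"
          proof -
            have "Suc p \<le> k" using k unfolding ends_def by blast
            then have "card (Spl \<inter> {Suc k..<e}) \<le> c * (E + 2)" using key[of "Suc k"] hk kl by simp
            then show ?thesis using IHk by simp
          qed
          also have "\<dots> = card (CSet p) * (E + 2)" using c by simp
          finally show ?thesis unfolding CSet_def .
        qed
      qed
    qed
  qed
qed


lemma main:
  "\<And>W' t e. finite W' \<Longrightarrow> card W' \<le> n \<Longrightarrow> W' \<subseteq> W \<Longrightarrow> ends t e \<Longrightarrow>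
     (\<forall>s k. t \<le> s \<longrightarrow> s < k \<longrightarrow> s < e \<longrightarrow> ends s k \<longrightarrow> (sg s, sg k, ta s) \<in> W') \<Longrightarrow>
     card (Spl \<inter> {t..<e}) \<le> K ^ (n + 1) - 3"
proof (induction n)
  case 0
  then have "W' = {}" by auto
  then have "\<not> t < e" using 0(4,5) by auto
  then show ?case by simp
next
  case (Suc n)
  fix W' t e
  assume fin: "finite W'" and cW: "card W' \<le> Suc n" and WW: "W' \<subseteq> W" and te0: "ends t e"
    and ty0: "\<forall>s k. t \<le> s \<longrightarrow> s < k \<longrightarrow> s < e \<longrightarrow> ends s k \<longrightarrow> (sg s, sg k, ta s) \<in> W'"
  have "K \<le> K ^ (n + 1)" by (rule self_le_power) (use K3 in auto)
  then have KP: "3 \<le> K ^ (n + 1)" using K3 by linarith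
  show "card (Spl \<inter> {t..<e}) \<le> K ^ (Suc n + 1) - 3"
    using te0 ty0
  proof (induction "e - t" arbitrary: t e rule: less_induct)
    case less
    note te = less.prems(1) and ty = less.prems(2)
    have em: "e \<le> m" using te unfolding ends_def by auto
    show ?case
    proof (cases "t < e")
      case False
      then show ?thesis by simp
    next
      case tle: True
      define w0 where "w0 = (sg t, sg e, ta t)"
      have w0: "w0 \<in> W'" using ty tle te unfolding w0_def by auto
      show ?thesis
      proof (cases "\<exists>t' e'. t < t' \<and> t' < e \<and> t' < e' \<and> ends t' e' \<and> (sg t', sg e', ta t') = w0")
        case True
        then obtain t' e' where tt: "t < t'" "t' < e" "t' < e'" "ends t' e'" "(sg t', sg e', ta t') = w0" by blast
        have e'e: "e' \<le> e" using ends_lam[OF te _ _ tt(4)] tt by auto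
        have "\<forall>i. (t \<le> i \<and> i < t') \<or> (e' \<le> i \<and> i < e) \<longrightarrow> i \<notin> Spl"
          using Lim[of t t' e' e] tt e'e em bt_ends[OF te] bt_ends[OF tt(4)] unfolding w0_def by auto
        then have sub: "Spl \<inter> {t..<e} \<subseteq> Spl \<inter> {t'..<e'}" by auto
        have "card (Spl \<inter> {t'..<e'}) \<le> K ^ (Suc n + 1) - 3"
          using less.hyps[of e' t'] tt e'e ty by auto
        moreover have "card (Spl \<inter> {t..<e}) \<le> card (Spl \<inter> {t'..<e'})" by (rule card_mono[OF _ sub]) simp
        ultimately show ?thesis by linarith
      next
        case False
        define E where "E = K ^ (n + 1) - 3"
        have IH: "card (Spl \<inter> {s..<k}) \<le> E" if a: "t < s" "ends s k" "k \<le> e" for s k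
        proof -
          have "card (W' - {w0}) \<le> n" using cW fin w0 by (simp add: card_Diff_singleton)
          moreover have "\<forall>s' k'. s \<le> s' \<longrightarrow> s' < k' \<longrightarrow> s' < k \<longrightarrow> ends s' k' \<longrightarrow> (sg s', sg k', ta s') \<in> W' - {w0}"
          proof (intro allI impI)
            fix s' k' assume b: "s \<le> s'" "s' < k'" "s' < k" "ends s' k'"
            have "(sg s', sg k', ta s') \<in> W'" using ty b a by auto
            moreover have "(sg s', sg k', ta s') \<noteq> w0" using False b a by auto
            ultimately show "(sg s', sg k', ta s') \<in> W' - {w0}" by auto
          qed
          ultimately show ?thesis unfolding E_def using Suc.IH[of "W' - {w0}" s k] fin WW a by auto
        qed
        have Fr: "card (Spl \<inter> {t..<e}) \<le> card ((\<lambda>q. (sg q, ta q)) ` {q. t \<le> q \<and> q < e \<and> h q = h t}) * (E + 2)"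
          using F[OF te IH, of t] tle by auto
        have "(\<lambda>q. (sg q, ta q)) ` {q. t \<le> q \<and> q < e \<and> h q = h t} \<subseteq> CS"
        proof
          fix x assume "x \<in> (\<lambda>q. (sg q, ta q)) ` {q. t \<le> q \<and> q < e \<and> h q = h t}"
          then obtain q where q: "t \<le> q" "q < e" "h q = h t" "x = (sg q, ta q)" by auto
          have "ends q e" using ends_base[OF te] q by auto
          then have "(sg q, sg e, ta q) \<in> W" using ty q WW by auto
          then show "x \<in> CS" using Wcol q by auto
        qed
        then have "card ((\<lambda>q. (sg q, ta q)) ` {q. t \<le> q \<and> q < e \<and> h q = h t}) \<le> K"
          using card_mono[OF CSfin] CScard le_trans by blast
        then have "card (Spl \<inter> {t..<e}) \<le> K * (E + 2)" using Fr by (meson le_trans mult_le_mono1)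
        also have "K * (E + 2) = K * K ^ (n + 1) - K" unfolding E_def using KP
          by (simp add: right_diff_distrib')
        also have "\<dots> \<le> K ^ (Suc n + 1) - 3" using K3 by simp
        finally show ?thesis .
      qed
    qed
  qed
qed

end


lemma Rtrip_mem:
  assumes "(a, b, c) \<in> Rtrip N"
  defines "f \<equiv> restrict (\<lambda>x. if x \<in> a then 0 else if x \<in> b then 1 else (2::nat)) N"
  shows "a = {x\<in>N. f x = 0}" "b = {x\<in>N. f x = 1}" "c = {x\<in>N. f x = 2}"
  using assms(1) unfolding Rtrip_def f_def restrict_def by auto

lemma card_Rtrip:
  fixes N :: "'a set"
  assumes fin: "finite N"
  shows "card (Rtrip N) \<le> 3 ^ card N"
proof -
  define g where "g = (\<lambda>(a, b, c::'a set). restrict (\<lambda>x. if x \<in> a then 0 else if x \<in> b then 1 else (2::nat)) N)"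
  have inj: "inj_on g (Rtrip N)"
  proof (rule inj_onI)
    fix p q assume pq: "p \<in> Rtrip N" "q \<in> Rtrip N" "g p = g q"
    obtain a b c where p: "p = (a, b, c)" by (cases p) auto
    obtain a' b' c' where q: "q = (a', b', c')" by (cases q) auto
    note P = Rtrip_mem[OF pq(1)[unfolded p]]
    note Q = Rtrip_mem[OF pq(2)[unfolded q]]
    have e: "restrict (\<lambda>x. if x \<in> a then 0 else if x \<in> b then 1 else (2::nat)) N
           = restrict (\<lambda>x. if x \<in> a' then 0 else if x \<in> b' then 1 else (2::nat)) N"
      using pq(3) unfolding p q g_def by simp
    have "a = a'" using P(1) Q(1) e by simp
    moreover have "b = b'" using P(2) Q(2) e by simp
    moreover have "c = c'" using P(3) Q(3) e by simp
    ultimately show "p = q" using p q by simp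
  qed
  have img: "g ` Rtrip N \<subseteq> PiE N (\<lambda>_. {0, 1, 2})"
    unfolding g_def by (auto split: if_splits)
  have "card (Rtrip N) = card (g ` Rtrip N)" using card_image[OF inj] by simp
  also have "\<dots> \<le> card (PiE N (\<lambda>_. {0::nat, 1, 2}))"
    by (rule card_mono[OF _ img]) (simp add: finite_PiE fin)
  also have "\<dots> = 3 ^ card N" using fin by (simp add: card_PiE numeral_3_eq_3)
  finally show ?thesis .
qed

lemma finite_Rtrip: "finite N \<Longrightarrow> finite (Rtrip N)"
  by (rule finite_subset[of _ "Pow N \<times> Pow N \<times> Pow N"]) (auto simp: Rtrip_def)

context
  fixes D :: "('n, 't, 'f) dtree" and H :: "nat list list" and P
  assumes ctl: "controlled D H" and vD: "valid P D"
begin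

lemma bt0: "H ! (length H - 1) \<in> beta D (H ! 0)"
proof -
  have "last H \<in> beta D (hd H)" using ctl unfolding controlled_def descent_def by blast
  moreover have "last H = H ! (length H - 1)" using H_ne[OF ctl] by (simp add: last_conv_nth)
  moreover have "hd H = H ! 0" using H_ne[OF ctl] by (simp add: hd_conv_nth)
  ultimately show ?thesis by simp
qed

lemma A2': "Suc i < length H \<Longrightarrow> eta D (H ! Suc i) \<le> Suc (eta D (H ! i))"
proof -
  assume a: "Suc i < length H"
  obtain n where n: "n \<le> Suc (eta D (H ! i))" "\<forall>w. child D (H ! i) w \<longrightarrow> internal D w \<longrightarrow> eta D w = n"
    using child_eta[OF vD H_int[OF ctl]] a by (metis Suc_lessD)
  have "eta D (H ! Suc i) = n" using n(2) H_child[OF ctl a] H_int[OF ctl a] by blast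
  then show ?thesis using n(1) by simp
qed

lemma A1':
  assumes ik: "i \<le> k" and km: "k \<le> length H - 1"
  shows "H ! k \<in> beta D (H ! i) \<longleftrightarrow>
    ((\<forall>l. i \<le> l \<and> l \<le> k \<longrightarrow> eta D (H ! i) \<le> eta D (H ! l)) \<and>
     (k = length H - 1 \<or> eta D (H ! Suc k) < eta D (H ! i)))"
proof -
  have kl: "k < length H" using km H_ne[OF ctl] by (cases H) auto
  note sci = scope_iff[OF ctl ik kl]
  show ?thesis
  proof
    assume b: "H ! k \<in> beta D (H ! i)"
    then have sc: "scope D (H ! i) (H ! k)" and nc: "\<forall>w. child D (H ! k) w \<longrightarrow> \<not> scope D (H ! i) w"
      unfolding beta_def by auto
    have c1: "\<forall>l. i \<le> l \<and> l \<le> k \<longrightarrow> eta D (H ! i) \<le> eta D (H ! l)" using sc sci by blast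
    have "k = length H - 1 \<or> eta D (H ! Suc k) < eta D (H ! i)"
    proof (cases "k = length H - 1")
      case False
      then have skl: "Suc k < length H" using kl by auto
      have "\<not> scope D (H ! i) (H ! Suc k)" using nc H_child[OF ctl skl] by blast
      then have "\<not> (\<forall>l. i \<le> l \<and> l \<le> Suc k \<longrightarrow> eta D (H ! i) \<le> eta D (H ! l))"
        using scope_iff[OF ctl _ skl, of i] ik by simp
      then obtain l where l: "i \<le> l" "l \<le> Suc k" "\<not> eta D (H ! i) \<le> eta D (H ! l)" by blast
      then have "l = Suc k" using c1 by (metis le_SucE)
      then show ?thesis using l by simp
    qed simp
    then show "(\<forall>l. i \<le> l \<and> l \<le> k \<longrightarrow> eta D (H ! i) \<le> eta D (H ! l)) \<and>
     (k = length H - 1 \<or> eta D (H ! Suc k) < eta D (H ! i))" using c1 by blast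
  next
    assume a: "(\<forall>l. i \<le> l \<and> l \<le> k \<longrightarrow> eta D (H ! i) \<le> eta D (H ! l)) \<and>
     (k = length H - 1 \<or> eta D (H ! Suc k) < eta D (H ! i))"
    have sc: "scope D (H ! i) (H ! k)" using a sci by blast
    have nc: "\<not> scope D (H ! i) w" if cw: "child D (H ! k) w" for w
    proof
      assume sw: "scope D (H ! i) w"
      have iw: "internal D w" "prefix (H ! i) w"
        and ew: "\<forall>u. prefix (H ! i) u \<and> prefix u w \<longrightarrow> eta D u \<ge> eta D (H ! i)"
        using sw unfolding scope_def by auto
      show False
      proof (cases "k = length H - 1")
        case False
        then have skl: "Suc k < length H" and lt: "eta D (H ! Suc k) < eta D (H ! i)" using kl a by auto
        obtain n where n: "\<forall>w. child D (H ! k) w \<longrightarrow> internal D w \<longrightarrow> eta D w = n"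
          using child_eta[OF vD H_int[OF ctl kl]] by blast
        have "eta D w = n" using n cw iw by blast
        moreover have "eta D (H ! Suc k) = n" using n H_child[OF ctl skl] H_int[OF ctl skl] by blast
        moreover have "eta D w \<ge> eta D (H ! i)" using ew iw(2) by blast
        ultimately show False using lt by simp
      next
        case True
        have b0: "H ! k \<in> beta D (H ! 0)" using bt0 True by simp
        have s0m: "scope D (H ! 0) (H ! k)" using b0 unfolding beta_def by blast
        have h0: "\<forall>l. 0 \<le> l \<and> l \<le> k \<longrightarrow> eta D (H ! 0) \<le> eta D (H ! l)"
          using scope_iff[OF ctl _ kl, of 0] s0m by simp
        have h0i: "eta D (H ! 0) \<le> eta D (H ! i)" using h0 ik by blast
        have p0i: "prefix (H ! 0) (H ! i)" using hpre[OF ctl _ ] ik kl by (meson le0 le_less_trans)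
        have "scope D (H ! 0) w" unfolding scope_def
        proof (intro conjI allI impI)
          show "internal D (H ! 0)" using H_int[OF ctl, of 0] kl by linarith
          show "internal D w" using iw by simp
          show "prefix (H ! 0) w" using p0i iw(2) by (rule prefix_order.trans)
          fix u assume u: "prefix (H ! 0) u \<and> prefix u w"
          from prefix_same_cases[of u w "H ! i"] u iw(2)
          have "prefix u (H ! i) \<or> prefix (H ! i) u" by blast
          then show "eta D (H ! 0) \<le> eta D u"
          proof
            assume "prefix u (H ! i)"
            then obtain l where l: "0 \<le> l" "l \<le> i" "u = H ! l"
              using hbetween[OF ctl _ _ conjunct1[OF u]] ik kl by (meson le0 le_less_trans)
            then show ?thesis using h0 ik by auto
          next
            assume "prefix (H ! i) u"
            then have "eta D u \<ge> eta D (H ! i)" using ew u by blast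
            then show ?thesis using h0i by simp
          qed
        qed
        then show False using b0 cw unfolding beta_def by blast
      qed
    qed
    show "H ! k \<in> beta D (H ! i)" unfolding beta_def using sc nc by blast
  qed
qed

end


theorem lemma4:
  fixes N :: "'n set" and T :: "'t set" and F :: "'f set"
    and P :: "('n, 't, 'f) prod set" and S :: 'n
    and D :: "('n, 't, 'f) dtree" and M :: "nat set"
    and W :: "('n \<times> 'n \<times> ('n set \<times> 'n set \<times> 'n set)) set"
    and H :: "nat list list"
  assumes "grounded N T F P S"
    and "is_dtree P S D"
    and "M \<subseteq> {..<length (yield D)}"
    and "W \<subseteq> N \<times> N \<times> Rtrip N"
    and "controlled D H"
    and "limited N D M H"
    and "respects_W N D M W H"
  shows "nsplits D M H \<le> (card N * 3 ^ card N) ^ (card W + 1)"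
proof -
  note ctl = assms(5)
  have vD: "valid P D" using assms(2) unfolding is_dtree_def by blast
  have finN: "finite N" and SN: "S \<in> N"
    using assms(1) unfolding grounded_def indexed_grammar_def by auto
  have cN: "1 \<le> card N" using finN SN by (metis One_nat_def Suc_leI card_gt_0_iff empty_iff)
  define m where "m = length H - 1"
  have Hne: "H \<noteq> []" using H_ne[OF ctl] .
  have mlen: "\<And>k. k \<le> m \<longleftrightarrow> k < length H" unfolding m_def using Hne by (cases H) auto
  define Spl where "Spl = {i. Suc i < length H \<and> split_at D M H i}"
  define K where "K = card N * 3 ^ card N"
  have K3: "3 \<le> K" unfolding K_def
  proof -
    have "(3::nat) ^ 1 \<le> 3 ^ card N" using cN by (intro power_increasing) auto
    then show "3 \<le> card N * 3 ^ card N" using cN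
      by (metis One_nat_def le_trans mult_le_mono nat_mult_1 power_one_right)
  qed
  have finR: "finite (Rtrip N)" using finite_Rtrip[OF finN] .
  interpret A: adesc m "\<lambda>k. eta D (H ! k)" "\<lambda>i k. H ! k \<in> beta D (H ! i)" Spl
    "\<lambda>k. sigma D (H ! k)" "\<lambda>k. tau N D M (H ! k)" W K "N \<times> Rtrip N"
  proof
    fix i k assume "i \<le> k" "k \<le> m"
    then show "(H ! k \<in> beta D (H ! i)) =
      ((\<forall>l. i \<le> l \<and> l \<le> k \<longrightarrow> eta D (H ! i) \<le> eta D (H ! l)) \<and>
       (k = m \<or> eta D (H ! Suc k) < eta D (H ! i)))"
      using A1'[OF ctl vD] unfolding m_def by blast
  next
    fix i assume "i < m"
    then have "Suc i < length H" using mlen by (metis Suc_leI)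
    then show "eta D (H ! Suc i) \<le> Suc (eta D (H ! i))" using A2'[OF ctl vD] by blast
  next
    fix b1 t1 t2 b2 i
    assume a: "b1 < t1" "t1 < t2" "t2 \<le> b2" "b2 \<le> m" "sigma D (H ! b1) = sigma D (H ! t1)"
      "sigma D (H ! t2) = sigma D (H ! b2)" "H ! b2 \<in> beta D (H ! b1)" "H ! t2 \<in> beta D (H ! t1)"
      "tau N D M (H ! b1) = tau N D M (H ! t1)" "b1 \<le> i \<and> i < t1 \<or> t2 \<le> i \<and> i < b2"
    have "b2 < length H" using a(4) mlen by blast
    then have "\<not> split_at D M H i" using assms(6) a unfolding limited_def by blast
    then show "i \<notin> Spl" unfolding Spl_def by blast
  next
    fix a b c assume "(a, b, c) \<in> W"
    then show "(a, c) \<in> N \<times> Rtrip N" using assms(4) by blast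
  next
    show "finite (N \<times> Rtrip N)" using finN finR by simp
  next
    have "card (N \<times> Rtrip N) = card N * card (Rtrip N)" by (simp add: card_cartesian_product)
    also have "\<dots> \<le> K" unfolding K_def using card_Rtrip[OF finN] by simp
    finally show "card (N \<times> Rtrip N) \<le> K" .
  next
    show "3 \<le> K" by (rule K3)
  qed
  have finW: "finite W"
    by (rule finite_subset[OF assms(4)]) (simp add: finN finR)
  have e0: "A.ends 0 m"
  proof -
    have "H ! m \<in> beta D (H ! 0)" using bt0[OF ctl vD] unfolding m_def .
    then show ?thesis using A.A1[of 0 m] unfolding A.ends_def by simp
  qed
  have ty: "\<forall>s k. 0 \<le> s \<longrightarrow> s < k \<longrightarrow> s < m \<longrightarrow> A.ends s k \<longrightarrow>
      (sigma D (H ! s), sigma D (H ! k), tau N D M (H ! s)) \<in> W"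
  proof (intro allI impI)
    fix s k assume b: "0 \<le> s" "s < k" "s < m" "A.ends s k"
    have "H ! k \<in> beta D (H ! s)" using A.bt_ends[OF b(4)] .
    moreover have "k < length H" using b(4) mlen unfolding A.ends_def by blast
    ultimately show "(sigma D (H ! s), sigma D (H ! k), tau N D M (H ! s)) \<in> W"
      using assms(7) b(2) unfolding respects_W_def by blast
  qed
  have "card (Spl \<inter> {0..<m}) \<le> K ^ (card W + 1) - 3"
    using A.main[OF finW order_refl order_refl e0 ty] .
  moreover have "Spl \<inter> {0..<m} = Spl" unfolding Spl_def m_def by auto
  moreover have "nsplits D M H = card Spl" unfolding nsplits_def Spl_def by simp
  ultimately have "nsplits D M H \<le> K ^ (card W + 1) - 3" by simp
  then show ?thesis unfolding K_def using diff_le_self le_trans by blast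
qed


end
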